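(* Let $\mathbb{K}$ be a field of characteristic $0$, let $m\geq 2$ and $d\geq 2$ be integers, let $M_1,\ldots,M_{\tau_m}$, $\tau_m=\binom{m+d-2}{d-1}$, be all the monomials of degree $d-1$ in $u_1,\ldots,u_m$, let $f=\sum_{j=1}^{\tau_m}x_jM_j$, and let $A=Q/\operatorname{Ann}_Q(f)$ be the associated full Perazzo algebra, where $Q=\mathbb{K}[X_1,\ldots,X_{\tau_m},U_1,\ldots,U_m]$ acts by differentiation. Then for $k=1,\ldots,\lfloor d/2\rfloor$, \[\dim_{\mathbb{K}} A_k=\binom{m+k-1}{k}+\binom{m+d-k-1}{d-k}.\] Moreover, for fixed $d$ there is $m_0$ such that for all $m\geq m_0$ the Hilbert function of $A$ is totally non-unimodal, i.e. $h_1>h_2>\cdots>h_{\lfloor d/2\rfloor}$ where $h_i=\dim A_i$.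
   Context: $A$ is a standard graded Artinian Gorenstein algebra of socle degree $d$ and codimension $m+\tau_m$. *)

theory Defs
  imports Complex_Main "HOL-Library.Function_Algebras"
begin

text \<open>Variables of Q: the x-variables are indexed by the monomials
  of degree d-1 in u_0..u_{m-1} themselves (exponent vectors beta :: nat => nat,
  zero outside {..<m}); this is a relabelling of x_1..x_tau_m.\<close>
datatype pvar = X "nat \<Rightarrow> nat" | U nat

text \<open>Monomials (exponent vectors) are functions pvar => nat; polynomials are
  coefficient functions (pvar => nat) => 'a.\<close>

definition u_monos :: "nat \<Rightarrow> nat \<Rightarrow> (nat \<Rightarrow> nat) set" where
  "u_monos m e = {\<beta>. (\<forall>i\<ge>m. \<beta> i = 0) \<and> (\<Sum>i<m. \<beta> i) = e}"

definition perazzo_vars :: "nat \<Rightarrow> nat \<Rightarrow> pvar set" where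
  "perazzo_vars m d = X ` u_monos m (d - 1) \<union> U ` {..<m}"

text \<open>The full Perazzo form f = sum over beta of x_beta * u^beta.\<close>
definition perazzo_f :: "nat \<Rightarrow> nat \<Rightarrow> (pvar \<Rightarrow> nat) \<Rightarrow> 'a::field" where
  "perazzo_f m d \<mu> = (if \<exists>\<beta>\<in>u_monos m (d - 1).
       \<mu> = (\<lambda>v. case v of X \<gamma> \<Rightarrow> (if \<gamma> = \<beta> then 1 else 0) | U i \<Rightarrow> \<beta> i)
     then 1 else 0)"

text \<open>Differentiation: the monomial operator with exponent vector a acting on
  a polynomial g (coefficient function), under the contraction/differentiation
  action: coefficient at b of (d^a g) is g(a+b) * prod_v (a_v+b_v)!/b_v!.\<close>
definition pderiv_mono :: "(pvar \<Rightarrow> nat) \<Rightarrow> ((pvar \<Rightarrow> nat) \<Rightarrow> 'a::field) \<Rightarrow> (pvar \<Rightarrow> nat) \<Rightarrow> 'a" where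
  "pderiv_mono a g b = g (\<lambda>v. a v + b v) *
     (\<Prod>v\<in>{v. a v \<noteq> 0}. of_nat (fact (a v + b v) div fact (b v)))"

definition Q_monos :: "nat \<Rightarrow> nat \<Rightarrow> nat \<Rightarrow> (pvar \<Rightarrow> nat) set" where
  "Q_monos m d k = {a. (\<forall>v. a v \<noteq> 0 \<longrightarrow> v \<in> perazzo_vars m d)
                       \<and> (\<Sum>v\<in>perazzo_vars m d. a v) = k}"

definition perazzo_derivs :: "nat \<Rightarrow> nat \<Rightarrow> nat \<Rightarrow> ((pvar \<Rightarrow> nat) \<Rightarrow> 'a::field) set" where
  "perazzo_derivs m d k = (\<lambda>a. pderiv_mono a (perazzo_f m d)) ` Q_monos m d k"

text \<open>dim_K A_k = dim Q_k / Ann_Q(f)_k = dim (Q_k o f) = dim span of the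
  k-th order derivatives of f.\<close>
definition perazzo_h :: "'a::field itself \<Rightarrow> nat \<Rightarrow> nat \<Rightarrow> nat \<Rightarrow> nat" where
  "perazzo_h _ m d k =
     vector_space.dim (\<lambda>(c::'a) g b. c * g b) (perazzo_derivs m d k :: ((pvar \<Rightarrow> nat) \<Rightarrow> 'a) set)"

end

theory Submission
  imports Defs "HOL-Library.Multiset"
begin

section \<open>Counting monomials\<close>

lemma u_monos_eq: "u_monos m e = count ` multisets_of_size {..<m} e"
proof (intro set_eqI iffI)
  fix \<beta> assume b: "\<beta> \<in> u_monos m e"
  have fin: "finite {x. \<beta> x > 0}"
    by (rule finite_subset[of _ "{..<m}"]) (use b in \<open>auto simp: u_monos_def not_less[symmetric]\<close>)
  define N where "N = Abs_multiset \<beta>"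
  have cN: "count N = \<beta>" using fin by (simp add: N_def)
  have s: "set_mset N \<subseteq> {..<m}"
  proof
    fix x assume "x \<in># N"
    hence nz: "\<beta> x \<noteq> 0" using cN by (metis count_eq_zero_iff)
    show "x \<in> {..<m}"
    proof (rule ccontr)
      assume "x \<notin> {..<m}"
      hence "x \<ge> m" by simp
      thus False using b nz by (simp add: u_monos_def)
    qed
  qed
  have "size N = (\<Sum>i\<in>set_mset N. \<beta> i)" by (simp add: size_multiset_overloaded_eq cN)
  also have "\<dots> = (\<Sum>i<m. \<beta> i)"
    by (rule sum.mono_neutral_left) (use s cN in \<open>auto simp: count_eq_zero_iff\<close>)
  finally have "size N = e" using b by (simp add: u_monos_def)
  then show "\<beta> \<in> count ` multisets_of_size {..<m} e"
    using s cN by (auto simp: multisets_of_size_def intro!: image_eqI[of _ _ N])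
next
  fix \<beta> assume "\<beta> \<in> count ` multisets_of_size {..<m} e"
  then obtain N where N: "set_mset N \<subseteq> {..<m}" "size N = e" "\<beta> = count N"
    by (auto simp: multisets_of_size_def)
  have "size N = (\<Sum>i<m. count N i)"
    unfolding size_multiset_overloaded_eq
    by (rule sum.mono_neutral_left) (use N in \<open>auto simp: count_eq_zero_iff\<close>)
  then show "\<beta> \<in> u_monos m e" using N
    by (auto simp: u_monos_def) (meson count_eq_zero_iff lessThan_iff not_le subsetD)
qed

lemma card_u_monos: "card (u_monos m e) = (m + e - 1) choose e"
proof -
  have "card (u_monos m e) = card (multisets_of_size {..<m} e)"
    unfolding u_monos_eq by (rule card_image) (simp add: inj_on_def multiset_eq_iff)
  then show ?thesis by (simp add: card_multisets_of_size)
qed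

lemma finite_u_monos: "finite (u_monos m e)"
  unfolding u_monos_eq by auto

definition uvec :: "(nat \<Rightarrow> nat) \<Rightarrow> pvar \<Rightarrow> nat" where
  "uvec \<alpha> = (\<lambda>v. case v of X _ \<Rightarrow> 0 | U i \<Rightarrow> \<alpha> i)"

definition fmono :: "(nat \<Rightarrow> nat) \<Rightarrow> pvar \<Rightarrow> nat" where
  "fmono \<beta> = (\<lambda>v. case v of X \<gamma> \<Rightarrow> (if \<gamma> = \<beta> then 1 else 0) | U i \<Rightarrow> \<beta> i)"

definition delta :: "(pvar \<Rightarrow> nat) \<Rightarrow> (pvar \<Rightarrow> nat) \<Rightarrow> 'a::field" where
  "delta p = (\<lambda>b. if b = p then 1 else 0)"

lemma uvec_simps[simp]: "uvec \<alpha> (X \<gamma>) = 0" "uvec \<alpha> (U i) = \<alpha> i"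
  by (simp_all add: uvec_def)

lemma fmono_simps[simp]: "fmono \<beta> (X \<gamma>) = (if \<gamma> = \<beta> then 1 else 0)" "fmono \<beta> (U i) = \<beta> i"
  by (simp_all add: fmono_def)

lemma uvec_inj: "uvec \<alpha> = uvec \<alpha>' \<Longrightarrow> \<alpha> = \<alpha>'"
proof
  fix i assume "uvec \<alpha> = uvec \<alpha>'"
  then have "uvec \<alpha> (U i) = uvec \<alpha>' (U i)" by simp
  then show "\<alpha> i = \<alpha>' i" by simp
qed

lemma perazzo_f_nz:
  "(perazzo_f m d \<mu> \<noteq> (0::'a::field)) \<longleftrightarrow> (\<exists>\<beta>\<in>u_monos m (d - 1). \<mu> = fmono \<beta>)"
  by (simp add: perazzo_f_def fmono_def)

lemma fact_div_pos: "0 < fact (x + y) div (fact y :: nat)"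
  by (simp add: div_greater_zero_iff fact_mono)

lemma pderiv_nz:
  "(pderiv_mono a g b \<noteq> (0::'a::field_char_0)) \<longleftrightarrow> g (\<lambda>v. a v + b v) \<noteq> 0"
proof -
  let ?S = "{v. a v \<noteq> 0}"
  let ?h = "\<lambda>v. (of_nat (fact (a v + b v) div fact (b v)) :: 'a)"
  have "\<forall>v. ?h v \<noteq> 0" using fact_div_pos by (metis of_nat_0_eq_iff neq0_conv)
  then have "prod ?h ?S \<noteq> 0" by (cases "finite ?S") (auto simp: prod_zero_iff)
  then show ?thesis by (simp add: pderiv_mono_def)
qed

lemma sum_perazzo_vars:
  "(\<Sum>v\<in>perazzo_vars m d. h v) = (\<Sum>\<beta>\<in>u_monos m (d - 1). h (X \<beta>)) + (\<Sum>i<m. h (U i))"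
proof -
  have "(\<Sum>v\<in>perazzo_vars m d. h v) = (\<Sum>v\<in>X ` u_monos m (d - 1). h v) + (\<Sum>v\<in>U ` {..<m}. h v)"
    unfolding perazzo_vars_def
    by (rule sum.union_disjoint) (auto simp: finite_u_monos)
  also have "\<dots> = (\<Sum>\<beta>\<in>u_monos m (d - 1). h (X \<beta>)) + (\<Sum>i<m. h (U i))"
    by (simp add: sum.reindex inj_on_def)
  finally show ?thesis .
qed

lemma finite_perazzo_vars: "finite (perazzo_vars m d)"
  by (simp add: perazzo_vars_def finite_u_monos)

section \<open>The vector space of coefficient functions\<close>

interpretation fs: vector_space "(\<lambda>c g b. c * g b) :: 'a::field \<Rightarrow> ((pvar \<Rightarrow> nat) \<Rightarrow> 'a) \<Rightarrow> _"
  by unfold_locales (auto simp: fun_eq_iff algebra_simps)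

lemma sum_fun_apply: "(\<Sum>y\<in>B. h y) p = (\<Sum>y\<in>B. h y p)"
  by (induction B rule: infinite_finite_induct) auto

lemma private_points_independent:
  fixes B :: "((pvar \<Rightarrow> nat) \<Rightarrow> 'a::field) set"
  assumes "finite B"
    and priv: "\<And>v. v \<in> B \<Longrightarrow> \<exists>p. v p \<noteq> 0 \<and> (\<forall>w\<in>B. w \<noteq> v \<longrightarrow> w p = 0)"
  shows "fs.independent B"
proof (rule fs.independent_if_scalars_zero[OF assms(1)])
  fix f :: "((pvar \<Rightarrow> nat) \<Rightarrow> 'a) \<Rightarrow> 'a" and x
  assume s: "(\<Sum>x\<in>B. (\<lambda>b. f x * x b)) = 0" and x: "x \<in> B"
  obtain p where p: "x p \<noteq> 0" "\<forall>w\<in>B. w \<noteq> x \<longrightarrow> w p = 0" using priv[OF x] by blast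
  have "0 = (\<Sum>y\<in>B. (\<lambda>b. f y * y b)) p" using s by simp
  also have "\<dots> = (\<Sum>y\<in>B. f y * y p)" by (simp add: sum_fun_apply)
  also have "\<dots> = f x * x p"
    by (rule sum.remove[OF assms(1) x, THEN trans]) (auto intro!: sum.neutral simp: p)
  finally show "f x = 0" using p by simp
qed

section \<open>Structure of derivatives\<close>

definition g0 :: "nat \<Rightarrow> nat \<Rightarrow> nat" where
  "g0 c = (\<lambda>i. if i = 0 then c else 0)"

definition pp :: "(nat \<Rightarrow> nat) \<Rightarrow> (nat \<Rightarrow> nat) \<Rightarrow> pvar \<Rightarrow> nat" where
  "pp \<alpha> \<gamma> = (\<lambda>v. case v of X \<delta> \<Rightarrow> (if \<delta> = (\<lambda>i. \<alpha> i + \<gamma> i) then 1 else 0) | U i \<Rightarrow> \<gamma> i)"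

lemma pp_simps[simp]: "pp \<alpha> \<gamma> (X \<delta>) = (if \<delta> = (\<lambda>i. \<alpha> i + \<gamma> i) then 1 else 0)" "pp \<alpha> \<gamma> (U i) = \<gamma> i"
  by (simp_all add: pp_def)

lemma g0_in: "m \<ge> 1 \<Longrightarrow> g0 c \<in> u_monos m c"
  by (auto simp: u_monos_def g0_def)

lemma add_in: "\<alpha> \<in> u_monos m p \<Longrightarrow> \<gamma> \<in> u_monos m q \<Longrightarrow> (\<lambda>i. \<alpha> i + \<gamma> i) \<in> u_monos m (p + q)"
  by (auto simp: u_monos_def sum.distrib)

lemma Q_support: "a \<in> Q_monos m d k \<Longrightarrow> a v \<noteq> 0 \<Longrightarrow> v \<in> perazzo_vars m d"
  by (auto simp: Q_monos_def)

lemma U_in_vars: "U i \<in> perazzo_vars m d \<longleftrightarrow> i < m"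
  by (auto simp: perazzo_vars_def)

lemma uvec_Q: "\<alpha> \<in> u_monos m k \<Longrightarrow> uvec \<alpha> \<in> Q_monos m d k"
proof -
  assume a: "\<alpha> \<in> u_monos m k"
  have "uvec \<alpha> v \<noteq> 0 \<Longrightarrow> v \<in> perazzo_vars m d" for v
    using a by (cases v) (auto simp: U_in_vars u_monos_def not_less[symmetric])
  moreover have "(\<Sum>v\<in>perazzo_vars m d. uvec \<alpha> v) = k"
    using a by (simp add: sum_perazzo_vars u_monos_def)
  ultimately show ?thesis by (auto simp: Q_monos_def)
qed

lemma pure_case:
  assumes a: "a \<in> Q_monos m d k" and x: "\<forall>\<gamma>. a (X \<gamma>) = 0"
  shows "\<exists>\<alpha>\<in>u_monos m k. a = uvec \<alpha>"
proof
  define \<alpha> where "\<alpha> = (\<lambda>i. a (U i))"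
  show "a = uvec \<alpha>"
  proof
    fix v show "a v = uvec \<alpha> v" using x by (cases v) (auto simp: \<alpha>_def)
  qed
  have s: "\<alpha> i = 0" if "i \<ge> m" for i
    using Q_support[OF a, of "U i"] that by (auto simp: \<alpha>_def U_in_vars)
  have "(\<Sum>v\<in>perazzo_vars m d. a v) = k" using a by (simp add: Q_monos_def)
  then have "(\<Sum>i<m. \<alpha> i) = k" using x by (simp add: sum_perazzo_vars \<alpha>_def)
  with s show "\<alpha> \<in> u_monos m k" by (simp add: u_monos_def)
qed

lemma x_case:
  assumes a: "a \<in> Q_monos m d k" and x: "a (X \<gamma>) \<noteq> 0" and d: "d \<ge> 1"
    and nz: "pderiv_mono a (perazzo_f m d) b \<noteq> (0::'a::field_char_0)"
  shows "b = uvec (\<lambda>i. b (U i)) \<and> (\<lambda>i. b (U i)) \<in> u_monos m (d - k)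
     \<and> (\<forall>b'. pderiv_mono a (perazzo_f m d) b' \<noteq> (0::'a) \<longrightarrow> b' = b)"
proof -
  have key: "\<exists>\<beta>\<in>u_monos m (d - 1). (\<forall>v. a v + c v = fmono \<beta> v) \<and> \<beta> = \<gamma>"
    if nzc: "pderiv_mono a (perazzo_f m d) c \<noteq> (0::'a)" for c
  proof -
    obtain \<beta> where \<beta>: "\<beta> \<in> u_monos m (d - 1)" "(\<lambda>v. a v + c v) = fmono \<beta>"
    proof -
      have "perazzo_f m d (\<lambda>v. a v + c v) \<noteq> (0::'a)" using nzc pderiv_nz by blast
      then show ?thesis unfolding perazzo_f_nz using that by blast
    qed
    then have e: "\<forall>v. a v + c v = fmono \<beta> v" by (metis)
    from e[rule_format, of "X \<gamma>"] x have "\<beta> = \<gamma>" by (auto split: if_splits)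
    with \<beta> e show ?thesis by blast
  qed
  obtain \<beta> where \<beta>: "\<beta> \<in> u_monos m (d - 1)" "\<forall>v. a v + b v = fmono \<beta> v" "\<beta> = \<gamma>"
    using key[OF nz] by blast
  have bX: "b (X \<delta>) = 0" for \<delta>
    using \<beta>(2)[rule_format, of "X \<delta>"] \<beta>(3) x by (auto split: if_splits)
  have b1: "b = uvec (\<lambda>i. b (U i))"
  proof
    fix v show "b v = uvec (\<lambda>i. b (U i)) v" using bX by (cases v) auto
  qed
  have supp: "b (U i) = 0" if "i \<ge> m" for i
    using \<beta>(1) \<beta>(2)[rule_format, of "U i"] that by (auto simp: u_monos_def)
  have "(\<Sum>v\<in>perazzo_vars m d. a v + b v) = (\<Sum>v\<in>perazzo_vars m d. fmono \<beta> v)"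
    using \<beta>(2) by simp
  also have "\<dots> = 1 + (d - 1)"
    using \<beta>(1) by (simp add: sum_perazzo_vars finite_u_monos sum.delta) (simp add: u_monos_def)
  finally have "k + (\<Sum>i<m. b (U i)) = d"
    using a d by (simp add: sum.distrib Q_monos_def sum_perazzo_vars bX)
  then have "(\<Sum>i<m. b (U i)) = d - k" by simp
  with supp have inm: "(\<lambda>i. b (U i)) \<in> u_monos m (d - k)" by (simp add: u_monos_def)
  have uniq: "b' = b" if nzb: "pderiv_mono a (perazzo_f m d) b' \<noteq> (0::'a)" for b'
  proof
    fix v
    obtain \<beta>' where "\<forall>v. a v + b' v = fmono \<beta>' v" "\<beta>' = \<gamma>" using key[OF nzb] by blast
    with \<beta> have "a v + b' v = a v + b v" by simp
    then show "b' v = b v" by simp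
  qed
  show ?thesis using b1 inm uniq by blast
qed

section \<open>Dimension\<close>

lemma B2_private:
  assumes m: "m \<ge> 1" and k: "k \<le> d - 1"
    and al: "\<alpha> \<in> u_monos m k"
  shows "pderiv_mono (uvec \<alpha>) (perazzo_f m d) (pp \<alpha> (g0 (d - 1 - k))) \<noteq> (0::'a::field_char_0)"
proof -
  have "(\<lambda>i. \<alpha> i + g0 (d - 1 - k) i) \<in> u_monos m (k + (d - 1 - k))"
    by (rule add_in[OF al g0_in[OF m]])
  moreover have "k + (d - 1 - k) = d - 1" using k by arith
  ultimately have inb: "(\<lambda>i. \<alpha> i + g0 (d - 1 - k) i) \<in> u_monos m (d - 1)" by simp
  have "(\<lambda>v. uvec \<alpha> v + pp \<alpha> (g0 (d - 1 - k)) v) = fmono (\<lambda>i. \<alpha> i + g0 (d - 1 - k) i)"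
  proof
    fix v show "uvec \<alpha> v + pp \<alpha> (g0 (d - 1 - k)) v = fmono (\<lambda>i. \<alpha> i + g0 (d - 1 - k) i) v"
      by (cases v) auto
  qed
  with inb have "perazzo_f m d (\<lambda>v. uvec \<alpha> v + pp \<alpha> (g0 (d - 1 - k)) v) \<noteq> (0::'a)"
    unfolding perazzo_f_nz by blast
  then show ?thesis using pderiv_nz by blast
qed

lemma B2_private2:
  assumes nz: "pderiv_mono (uvec \<alpha>') (perazzo_f m d) (pp \<alpha> \<gamma>) \<noteq> (0::'a::field_char_0)"
  shows "\<alpha>' = \<alpha>"
proof -
  have "perazzo_f m d (\<lambda>v. uvec \<alpha>' v + pp \<alpha> \<gamma> v) \<noteq> (0::'a)" using nz pderiv_nz by blast
  then obtain \<beta> where "(\<lambda>v. uvec \<alpha>' v + pp \<alpha> \<gamma> v) = fmono \<beta>"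
    unfolding perazzo_f_nz by blast
  then have e: "\<And>v. uvec \<alpha>' v + pp \<alpha> \<gamma> v = fmono \<beta> v" by metis
  from e[of "X (\<lambda>i. \<alpha> i + \<gamma> i)"] have b: "\<beta> = (\<lambda>i. \<alpha> i + \<gamma> i)" by (auto split: if_splits)
  show ?thesis
  proof
    fix i show "\<alpha>' i = \<alpha> i" using e[of "U i"] b by simp
  qed
qed

lemma B2_vanish_u:
  "pderiv_mono (uvec \<alpha>) (perazzo_f m d) (uvec \<gamma>) = (0::'a::field_char_0)"
proof (rule ccontr)
  assume "pderiv_mono (uvec \<alpha>) (perazzo_f m d) (uvec \<gamma>) \<noteq> (0::'a)"
  then have "perazzo_f m d (\<lambda>v. uvec \<alpha> v + uvec \<gamma> v) \<noteq> (0::'a)" using pderiv_nz by blast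
  then obtain \<beta> where "(\<lambda>v. uvec \<alpha> v + uvec \<gamma> v) = fmono \<beta>"
    unfolding perazzo_f_nz by blast
  then have "uvec \<alpha> (X \<beta>) + uvec \<gamma> (X \<beta>) = fmono \<beta> (X \<beta>)" by metis
  then show False by simp
qed

lemma delta_vanish_pp: "delta (uvec \<gamma>) (pp \<alpha> \<gamma>') = (0::'a::field)"
proof -
  have "pp \<alpha> \<gamma>' (X (\<lambda>i. \<alpha> i + \<gamma>' i)) \<noteq> uvec \<gamma> (X (\<lambda>i. \<alpha> i + \<gamma>' i))" by simp
  then have "pp \<alpha> \<gamma>' \<noteq> uvec \<gamma>" by metis
  then show ?thesis by (simp add: delta_def)
qed

lemma dim_formula:
  assumes m: "m \<ge> 1" and k1: "1 \<le> k" and kd: "k \<le> d - 1"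
  shows "perazzo_h TYPE('a::field_char_0) m d k = card (u_monos m k) + card (u_monos m (d - k))"
proof -
  have d: "d \<ge> 1" using k1 kd by simp
  define F where "F = (perazzo_f m d :: _ \<Rightarrow> 'a)"
  define D where "D = (perazzo_derivs m d k :: ((pvar \<Rightarrow> nat) \<Rightarrow> 'a) set)"
  define B1 where "B1 = (\<lambda>\<gamma>. (delta (uvec \<gamma>) :: _ \<Rightarrow> 'a)) ` u_monos m (d - k)"
  define B2 where "B2 = (\<lambda>\<alpha>. pderiv_mono (uvec \<alpha>) F) ` u_monos m k"
  define c0 where "c0 = d - 1 - k"
  have D_def': "D = (\<lambda>a. pderiv_mono a F) ` Q_monos m d k"
    by (simp add: D_def F_def perazzo_derivs_def)
  have scale_delta: "g = (\<lambda>b'. g b * delta b b')"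
    if "\<forall>b'. g b' \<noteq> 0 \<longrightarrow> b' = b" for g :: "(pvar \<Rightarrow> nat) \<Rightarrow> 'a" and b
  proof
    fix b' show "g b' = g b * delta b b'" using that by (cases "b' = b") (auto simp: delta_def)
  qed
  have S1: "D \<subseteq> fs.span (B1 \<union> B2)"
  proof
    fix g assume "g \<in> D"
    then obtain a where a: "a \<in> Q_monos m d k" and g: "g = pderiv_mono a F"
      unfolding D_def' by blast
    show "g \<in> fs.span (B1 \<union> B2)"
    proof (cases "\<forall>\<gamma>. a (X \<gamma>) = 0")
      case True
      then obtain \<alpha> where "\<alpha> \<in> u_monos m k" "a = uvec \<alpha>" using pure_case[OF a] by blast
      then have "g \<in> B2" by (simp add: B2_def g)
      then show ?thesis by (simp add: fs.span_base)
    next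
      case False
      then obtain \<gamma> where x: "a (X \<gamma>) \<noteq> 0" by blast
      show ?thesis
      proof (cases "\<forall>b. g b = 0")
        case True
        then have "g = 0" by (simp add: fun_eq_iff)
        then show ?thesis by (simp add: fs.span_zero)
      next
        case False
        then obtain b where nz: "g b \<noteq> 0" by blast
        note xc = x_case[OF a x d nz[unfolded g F_def]]
        have "delta b \<in> B1" unfolding B1_def using xc by (metis (no_types, lifting) image_eqI)
        then have "delta b \<in> fs.span (B1 \<union> B2)" by (simp add: fs.span_base)
        then have "(\<lambda>b'. g b * delta b b') \<in> fs.span (B1 \<union> B2)" by (rule fs.span_scale)
        moreover have "g = (\<lambda>b'. g b * delta b b')"
          by (rule scale_delta) (use xc in \<open>simp add: g F_def\<close>)
        ultimately show ?thesis by simp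
      qed
    qed
  qed
  have S2: "B1 \<subseteq> fs.span D"
  proof
    fix h assume "h \<in> B1"
    then obtain \<gamma> where ga: "\<gamma> \<in> u_monos m (d - k)" and h: "h = delta (uvec \<gamma>)"
      unfolding B1_def by blast
    define \<beta> where "\<beta> = (\<lambda>i. \<gamma> i + g0 (k - 1) i)"
    have "\<beta> \<in> u_monos m (d - k + (k - 1))" unfolding \<beta>_def by (rule add_in[OF ga g0_in[OF m]])
    then have bin: "\<beta> \<in> u_monos m (d - 1)" using k1 kd by simp
    define a where "a = (\<lambda>v. case v of X \<delta> \<Rightarrow> (if \<delta> = \<beta> then 1 else 0) | U i \<Rightarrow> g0 (k - 1) i)"
    have aX: "a (X \<delta>) = (if \<delta> = \<beta> then 1 else 0)" "a (U i) = g0 (k - 1) i" for \<delta> i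
      by (simp_all add: a_def)
    have aQ: "a \<in> Q_monos m d k"
    proof -
      have "a v \<noteq> 0 \<Longrightarrow> v \<in> perazzo_vars m d" for v
        using bin m by (cases v) (auto simp: aX perazzo_vars_def g0_def split: if_splits)
      moreover have "(\<Sum>v\<in>perazzo_vars m d. a v) = k"
        using bin m k1 by (simp add: sum_perazzo_vars aX finite_u_monos sum.delta g0_def)
      ultimately show ?thesis by (auto simp: Q_monos_def)
    qed
    have "(\<lambda>v. a v + uvec \<gamma> v) = fmono \<beta>"
    proof
      fix v show "a v + uvec \<gamma> v = fmono \<beta> v" by (cases v) (auto simp: aX \<beta>_def)
    qed
    with bin have "perazzo_f m d (\<lambda>v. a v + uvec \<gamma> v) \<noteq> (0::'a)"
      unfolding perazzo_f_nz by blast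
    then have nz: "pderiv_mono a F (uvec \<gamma>) \<noteq> 0" unfolding F_def using pderiv_nz by blast
    note xc = x_case[OF aQ _ d nz[unfolded F_def], of \<beta>]
    let ?g = "pderiv_mono a F"
    have geq: "?g = (\<lambda>b'. ?g (uvec \<gamma>) * delta (uvec \<gamma>) b')"
      by (rule scale_delta) (use xc in \<open>simp add: aX F_def\<close>)
    have "?g \<in> fs.span D" unfolding D_def' by (rule fs.span_base) (use aQ in blast)
    then have "(\<lambda>b'. inverse (?g (uvec \<gamma>)) * ?g b') \<in> fs.span D" by (rule fs.span_scale)
    moreover have "(\<lambda>b'. inverse (?g (uvec \<gamma>)) * ?g b') = h"
    proof
      fix b' show "inverse (?g (uvec \<gamma>)) * ?g b' = h b'"
        using nz by (subst geq) (simp add: h)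
    qed
    ultimately show "h \<in> fs.span D" by simp
  qed
  have S3: "B2 \<subseteq> D"
    unfolding B2_def D_def' using uvec_Q by blast
  have S3': "B2 \<subseteq> fs.span D" using S3 fs.span_superset by (rule subset_trans)
  have span_eq: "fs.span (B1 \<union> B2) = fs.span D"
    unfolding fs.span_eq using S1 S2 S3' by (simp only: Un_subset_iff)
  have fin: "finite (B1 \<union> B2)" by (simp add: B1_def B2_def finite_u_monos)
  have ind: "fs.independent (B1 \<union> B2)"
  proof (rule private_points_independent[OF fin])
    fix v assume "v \<in> B1 \<union> B2"
    then show "\<exists>p. v p \<noteq> 0 \<and> (\<forall>w\<in>B1 \<union> B2. w \<noteq> v \<longrightarrow> w p = 0)"
    proof
      assume "v \<in> B1"
      then obtain \<gamma> where v: "v = delta (uvec \<gamma>)" unfolding B1_def by blast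
      have "v (uvec \<gamma>) \<noteq> 0" by (simp add: v delta_def)
      moreover have "w (uvec \<gamma>) = 0" if w: "w \<in> B1 \<union> B2" "w \<noteq> v" for w
        using w(1)
      proof
        assume "w \<in> B1"
        then obtain \<gamma>' where w': "w = delta (uvec \<gamma>')" unfolding B1_def by blast
        then have "\<gamma>' \<noteq> \<gamma>" using w(2) v by blast
        then have "uvec \<gamma> \<noteq> uvec \<gamma>'" using uvec_inj by metis
        then show ?thesis by (simp add: w' delta_def)
      next
        assume "w \<in> B2"
        then obtain \<alpha> where w': "w = pderiv_mono (uvec \<alpha>) F" unfolding B2_def by blast
        show ?thesis unfolding w' F_def by (rule B2_vanish_u)
      qed
      ultimately show ?thesis by blast
    next
      assume "v \<in> B2"
      then obtain \<alpha> where al: "\<alpha> \<in> u_monos m k" and v: "v = pderiv_mono (uvec \<alpha>) F"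
        unfolding B2_def by blast
      have "v (pp \<alpha> (g0 c0)) \<noteq> 0" unfolding v F_def c0_def by (rule B2_private[OF m kd al])
      moreover have "w (pp \<alpha> (g0 c0)) = 0" if w: "w \<in> B1 \<union> B2" "w \<noteq> v" for w
        using w(1)
      proof
        assume "w \<in> B1"
        then obtain \<gamma>' where w': "w = delta (uvec \<gamma>')" unfolding B1_def by blast
        show ?thesis unfolding w' by (rule delta_vanish_pp)
      next
        assume "w \<in> B2"
        then obtain \<alpha>' where w': "w = pderiv_mono (uvec \<alpha>') F" unfolding B2_def by blast
        show ?thesis
        proof (rule ccontr)
          assume "w (pp \<alpha> (g0 c0)) \<noteq> 0"
          then have "\<alpha>' = \<alpha>" unfolding w' F_def by (rule B2_private2)
          then show False using w(2) w' v by blast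
        qed
      qed
      ultimately show ?thesis by blast
    qed
  qed
  have inj1: "inj_on (\<lambda>\<gamma>. (delta (uvec \<gamma>) :: _ \<Rightarrow> 'a)) (u_monos m (d - k))"
  proof (rule inj_onI)
    fix \<gamma> \<gamma>' assume "(delta (uvec \<gamma>) :: _ \<Rightarrow> 'a) = delta (uvec \<gamma>')"
    then have "(delta (uvec \<gamma>) :: _ \<Rightarrow> 'a) (uvec \<gamma>) = delta (uvec \<gamma>') (uvec \<gamma>)" by simp
    then have "uvec \<gamma> = uvec \<gamma>'" by (simp add: delta_def split: if_splits)
    then show "\<gamma> = \<gamma>'" by (rule uvec_inj)
  qed
  have inj2: "inj_on (\<lambda>\<alpha>. pderiv_mono (uvec \<alpha>) F) (u_monos m k)"
  proof (rule inj_onI)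
    fix \<alpha> \<alpha>' assume al: "\<alpha> \<in> u_monos m k" and eq: "pderiv_mono (uvec \<alpha>) F = pderiv_mono (uvec \<alpha>') F"
    have "pderiv_mono (uvec \<alpha>) F (pp \<alpha> (g0 c0)) \<noteq> 0" unfolding F_def c0_def by (rule B2_private[OF m kd al])
    then have "pderiv_mono (uvec \<alpha>') (perazzo_f m d) (pp \<alpha> (g0 c0)) \<noteq> (0::'a)" using eq by (simp add: F_def)
    then show "\<alpha> = \<alpha>'" by (rule B2_private2[symmetric])
  qed
  have disj: "B1 \<inter> B2 = {}"
  proof -
    have False if "delta (uvec \<gamma>) = pderiv_mono (uvec \<alpha>) F" for \<gamma> \<alpha>
    proof -
      have "(delta (uvec \<gamma>) :: _ \<Rightarrow> 'a) (uvec \<gamma>) = pderiv_mono (uvec \<alpha>) F (uvec \<gamma>)" using that by simp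
      then show False by (simp add: delta_def F_def B2_vanish_u)
    qed
    then show ?thesis unfolding B1_def B2_def by blast
  qed
  have "perazzo_h TYPE('a) m d k = fs.dim D" by (simp add: perazzo_h_def D_def)
  also have "\<dots> = card (B1 \<union> B2)" by (rule fs.dim_eq_card[OF span_eq ind])
  also have "\<dots> = card B1 + card B2" by (rule card_Un_disjoint) (use fin disj in auto)
  also have "\<dots> = card (u_monos m (d - k)) + card (u_monos m k)"
    by (simp only: B1_def B2_def card_image[OF inj1] card_image[OF inj2])
  finally show ?thesis by simp
qed

lemma choose_top_le: "x \<le> y \<Longrightarrow> x choose r \<le> y choose (r::nat)"
proof (induction y rule: dec_induct)
  case base then show ?case by simp
next
  case (step y)
  show ?case
  proof (cases r)
    case 0 then show ?thesis by simp
  next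
    case (Suc r') then show ?thesis using step.IH by simp
  qed
qed

lemma choose_top_strict:
  assumes r: "1 \<le> r" "r \<le> Suc x" and xy: "x < y"
  shows "x choose r < y choose (r::nat)"
proof -
  obtain r' where r': "r = Suc r'" using r by (cases r) auto
  have "x choose r < Suc x choose r" using r r' by simp
  also have "\<dots> \<le> y choose r" using xy by (intro choose_top_le) simp
  finally show ?thesis .
qed

lemma binom_ineq:
  assumes n: "n \<ge> 2" and ie: "i + 1 \<le> e"
  shows "(n + i + 1 choose (i + 1)) + (n + e choose e) < (n + i choose i) + (n + e + 1 choose (e + 1))"
proof -
  have a1: "n + i + 1 choose (i + 1) = (n + i choose i) + (n + i choose (i + 1))" by simp
  have a2: "n + e + 1 choose (e + 1) = (n + e choose e) + (n + e choose (e + 1))" by simp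
  have s1: "n + i choose (i + 1) = n + i choose (n - 1)"
    using binomial_symmetric[of "i + 1" "n + i"] n by (simp add: add.commute)
  have s2: "n + e choose (e + 1) = n + e choose (n - 1)"
    using binomial_symmetric[of "e + 1" "n + e"] n by (simp add: add.commute)
  have "n + i choose (n - 1) < n + e choose (n - 1)"
    by (rule choose_top_strict) (use n ie in auto)
  then show ?thesis using a1 a2 s1 s2 by simp
qed

theorem proposition2p3:
  fixes d :: nat
  assumes "d \<ge> 2"
  shows "(\<forall>m\<ge>2. \<forall>k\<in>{1..d div 2}.
            perazzo_h TYPE('a::field_char_0) m d k
              = (m + k - 1 choose k) + (m + d - k - 1 choose (d - k)))
       \<and> (\<exists>m0\<ge>2. \<forall>m\<ge>m0. \<forall>i. 1 \<le> i \<and> i < d div 2 \<longrightarrow>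
            perazzo_h TYPE('a) m d (i + 1) < perazzo_h TYPE('a) m d i)"
proof -
  have H: "perazzo_h TYPE('a) m d k = (m + k - 1 choose k) + (m + d - k - 1 choose (d - k))"
    if m: "m \<ge> 2" and k: "1 \<le> k" "k \<le> d div 2" for m k
  proof -
    have kd: "k \<le> d - 1" using k assms by simp
    have "m + (d - k) - 1 = m + d - k - 1" using kd by simp
    then show ?thesis using dim_formula[OF _ k(1) kd, where 'a='a] m
      by (simp add: card_u_monos)
  qed
  have P2: "perazzo_h TYPE('a) m d (i + 1) < perazzo_h TYPE('a) m d i"
    if m: "m \<ge> 3" and i: "1 \<le> i" "i < d div 2" for m i
  proof -
    define n where "n = m - 1"
    define e where "e = d - i - 1"
    have n2: "n \<ge> 2" using m by (simp add: n_def)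
    have ie: "i + 1 \<le> e" using i by (simp add: e_def)
    have h1: "perazzo_h TYPE('a) m d (i + 1) = (n + i + 1 choose (i + 1)) + (n + e choose e)"
    proof -
      have "perazzo_h TYPE('a) m d (i + 1) = (m + (i + 1) - 1 choose (i + 1)) + (m + d - (i + 1) - 1 choose (d - (i + 1)))"
        using H[of m "i + 1"] m i by simp
      moreover have "m + (i + 1) - 1 = n + i + 1" "m + d - (i + 1) - 1 = n + e" "d - (i + 1) = e"
        using m i ie by (simp_all add: n_def e_def)
      ultimately show ?thesis by simp
    qed
    have h2: "perazzo_h TYPE('a) m d i = (n + i choose i) + (n + e + 1 choose (e + 1))"
    proof -
      have "perazzo_h TYPE('a) m d i = (m + i - 1 choose i) + (m + d - i - 1 choose (d - i))"
        using H[of m i] m i by simp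
      moreover have "m + i - 1 = n + i" "m + d - i - 1 = n + e + 1" "d - i = e + 1"
        using m i ie by (simp_all add: n_def e_def)
      ultimately show ?thesis by simp
    qed
    show ?thesis unfolding h1 h2 by (rule binom_ineq[OF n2 ie])
  qed
  show ?thesis
  proof
    show "\<forall>m\<ge>2. \<forall>k\<in>{1..d div 2}.
            perazzo_h TYPE('a::field_char_0) m d k
              = (m + k - 1 choose k) + (m + d - k - 1 choose (d - k))"
      using H by auto
    show "\<exists>m0\<ge>2. \<forall>m\<ge>m0. \<forall>i. 1 \<le> i \<and> i < d div 2 \<longrightarrow>
            perazzo_h TYPE('a) m d (i + 1) < perazzo_h TYPE('a) m d i"
      by (rule exI[of _ 3]) (use P2 in auto)
  qed
qed

end
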